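(* Let $\{X_i\}_{i\ge1}$ be i.i.d. real random variables with a unimodal density $f$ satisfying $\sup_{x\in\mathbb R}f(x)\le C_0$ for some constant $C_0>0$, and let $f_n$ denote the density of $\sum_{i=1}^nX_i$. Then there is a constant $C>0$ such that $\sup_{n\ge1}\sup_{x\in\mathbb R}f_n(x)\le C$. Moreover, if $N$ is a $\{1,2,\dots\}$-valued random variable independent of $\{X_i\}$ and $f_N$ denotes the density of $\sum_{i=1}^NX_i$, then $\sup_{x\in\mathbb R}f_N(x)\le C$. *)

theory Defs
  imports "HOL-Probability.Probability"
begin

definition unimodal :: "(real \<Rightarrow> real) \<Rightarrow> bool" where
  "unimodal f \<longleftrightarrow> (\<exists>m. mono_on {..m} f \<and> antimono_on {m..} f)"

end

theory Submission imports Defs begin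

lemma convolution_density_measure:
  fixes f :: "real \<Rightarrow> ennreal"
  assumes [measurable]: "f \<in> borel_measurable borel"
  assumes fin: "finite_measure (density lborel f)" "finite_measure N"
  assumes sN[measurable_cong, simp]: "sets N = sets borel"
  shows "density lborel f \<star> N = density lborel (\<lambda>x. \<integral>\<^sup>+y. f (x - y) \<partial>N)"
    (is "?l = ?r")
proof (intro measure_eqI)
  interpret N: finite_measure N by fact
  interpret P: pair_sigma_finite lborel N
    by (intro pair_sigma_finite.intro lborel.sigma_finite_measure_axioms N.sigma_finite_measure)
  fix A assume "A \<in> sets ?l"
  then have [measurable]: "A \<in> sets borel"
    by simp
  have "emeasure ?l A = (\<integral>\<^sup>+x. \<integral>\<^sup>+y. indicator A (x + y) \<partial>N \<partial>density lborel f)"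
    using fin by (intro convolution_emeasure') auto
  also have "\<dots> = (\<integral>\<^sup>+x. f x * (\<integral>\<^sup>+y. indicator A (x + y) \<partial>N) \<partial>lborel)"
    by (subst nn_integral_density) auto
  also have "\<dots> = (\<integral>\<^sup>+x. (\<integral>\<^sup>+y. f x * indicator A (x + y) \<partial>N) \<partial>lborel)"
    by (intro nn_integral_cong nn_integral_cmult[symmetric]) auto
  also have "\<dots> = (\<integral>\<^sup>+y. (\<integral>\<^sup>+x. f x * indicator A (x + y) \<partial>lborel) \<partial>N)"
    by (intro P.Fubini'[symmetric]) measurable
  also have "\<dots> = (\<integral>\<^sup>+y. (\<integral>\<^sup>+x. f (x - y) * indicator A x \<partial>lborel) \<partial>N)"
  proof (rule nn_integral_cong)
    fix y
    show "(\<integral>\<^sup>+x. f x * indicator A (x + y) \<partial>lborel) = (\<integral>\<^sup>+x. f (x - y) * indicator A x \<partial>lborel)"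
      by (subst nn_integral_real_affine[where c=1 and t="-y"])
         (auto simp add: one_ennreal_def[symmetric])
  qed
  also have "\<dots> = (\<integral>\<^sup>+x. (\<integral>\<^sup>+y. f (x - y) * indicator A x \<partial>N) \<partial>lborel)"
    by (intro P.Fubini') measurable
  also have "\<dots> = (\<integral>\<^sup>+x. (\<integral>\<^sup>+y. f (x - y) \<partial>N) * indicator A x \<partial>lborel)"
    by (intro nn_integral_cong nn_integral_multc) auto
  also have "\<dots> = emeasure ?r A"
    by (subst emeasure_density) (auto intro!: nn_integral_cong simp: mult.commute)
  finally show "emeasure ?l A = emeasure ?r A" .
qed simp


lemma (in prob_space) distributed_add_bounded:
  fixes f :: "real \<Rightarrow> real"
  assumes indep: "indep_var borel X borel Y"
    and Xd: "distributed M lborel X (\<lambda>x. ennreal (f x))"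
    and Y[measurable]: "random_variable borel Y"
    and bound: "\<And>x. f x \<le> C" and nonneg: "\<And>x. 0 \<le> f x"
  shows "\<exists>g. distributed M lborel (\<lambda>\<omega>. X \<omega> + Y \<omega>) (\<lambda>x. ennreal (g x)) \<and> (\<forall>x. 0 \<le> g x \<and> g x \<le> C)"
proof -
  define h where "h = (\<lambda>x. \<integral>\<^sup>+y. ennreal (f (x - y)) \<partial>distr M borel Y)"
  have fm[measurable]: "(\<lambda>x. ennreal (f x)) \<in> borel_measurable borel"
    using distributed_borel_measurable[OF Xd] by simp
  have Xm[measurable]: "random_variable borel X"
    using distributed_measurable[OF Xd] by simp
  interpret PY: prob_space "distr M borel Y"
    by (rule prob_space_distr) simp
  have "distr M borel (\<lambda>x. X x + Y x) = (distr M borel X \<star> distr M borel Y)"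
    by (intro sum_indep_random_variable) (auto simp: indep)
  also have "\<dots> = (density lborel (\<lambda>x. ennreal (f x)) \<star> distr M borel Y)"
    using distributed_distr_eq_density[OF Xd]
    by (simp cong: distr_cong)
  also have "\<dots> = density lborel h"
    unfolding h_def
  proof (rule convolution_density_measure)
    show "finite_measure (density lborel (\<lambda>x. ennreal (f x)))"
      using Xd by (rule distributed_finite_measure_density)
    show "finite_measure (distr M borel Y)" by unfold_locales
  qed auto
  finally have eq: "distr M lborel (\<lambda>x. X x + Y x) = density lborel h"
    by (simp cong: distr_cong)
  have hm: "h \<in> borel_measurable lborel"
    unfolding h_def by measurable
  have hb: "h x \<le> ennreal C" for x
  proof -
    have "h x \<le> (\<integral>\<^sup>+y. ennreal C \<partial>distr M borel Y)"
      unfolding h_def by (intro nn_integral_mono) (simp add: bound ennreal_leI)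
    also have "\<dots> = ennreal C"
      using PY.emeasure_space_1 by simp
    finally show ?thesis .
  qed
  have C0: "0 \<le> C" using nonneg[of 0] bound[of 0] by simp
  define g where "g = (\<lambda>x. enn2real (h x))"
  have hg: "h x = ennreal (g x)" for x
    unfolding g_def using hb[of x] using neq_top_trans[OF ennreal_neq_top] by (auto simp: ennreal_enn2real_if)
  have hg': "h = (\<lambda>x. ennreal (g x))" using hg by (intro ext) auto
  have "distributed M lborel (\<lambda>\<omega>. X \<omega> + Y \<omega>) (\<lambda>x. ennreal (g x))"
    unfolding distributed_def
  proof safe
    show "distr M lborel (\<lambda>x. X x + Y x) = density lborel (\<lambda>x. ennreal (g x))"
      using eq hg' by simp
    show "(\<lambda>x. ennreal (g x)) \<in> borel_measurable lborel"
      using hm hg' by simp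
    show "random_variable lborel (\<lambda>x. X x + Y x)" by simp
  qed
  moreover have "0 \<le> g x \<and> g x \<le> C" for x
    unfolding g_def using hb[of x] C0 by (simp add: enn2real_leI)
  ultimately show ?thesis by blast
qed


lemma distributed_cong_rv:
  assumes "\<And>\<omega>. \<omega> \<in> space M \<Longrightarrow> X \<omega> = Y \<omega>" "distributed M N X f"
  shows "distributed M N Y f"
  using assms unfolding distributed_def
  by (auto simp: measurable_cong[of M X Y, symmetric] cong: distr_cong)

lemma nat_floor_measurable: "(\<lambda>r::real. nat \<lfloor>r\<rfloor>) \<in> borel \<rightarrow>\<^sub>M count_space UNIV"
proof (subst measurable_count_space_eq2_countable, safe)
  fix k :: nat
  have "(\<lambda>r::real. nat \<lfloor>r\<rfloor>) -` {k} \<inter> space borel = {r. nat \<lfloor>r\<rfloor> = k}" by auto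
  also have "\<dots> \<in> sets borel" by measurable
  finally show "(\<lambda>r::real. nat \<lfloor>r\<rfloor>) -` {k} \<inter> space borel \<in> sets borel" .
qed auto

theorem lemmaA3:
  fixes M :: "'a measure" and X :: "nat \<Rightarrow> 'a \<Rightarrow> real"
    and f :: "real \<Rightarrow> real" and C\<^sub>0 :: real
  assumes "prob_space M"
    and indep: "prob_space.indep_vars M (\<lambda>_. borel) X UNIV"
    and dens: "\<And>i. distributed M lborel (X i) (\<lambda>x. ennreal (f x))"
    and nonneg: "\<And>x. 0 \<le> f x"
    and "unimodal f"
    and "C\<^sub>0 > 0" and bound: "\<And>x. f x \<le> C\<^sub>0"
  shows "\<exists>C>0.
     (\<forall>n\<ge>1. \<exists>g. distributed M lborel (\<lambda>\<omega>. \<Sum>i<n. X i \<omega>) (\<lambda>x. ennreal (g x))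
                  \<and> (\<forall>x. 0 \<le> g x \<and> g x \<le> C))
   \<and> (\<forall>N :: 'a \<Rightarrow> nat.
        N \<in> measurable M (count_space UNIV)
        \<longrightarrow> (\<forall>\<omega>\<in>space M. N \<omega> \<ge> 1)
        \<longrightarrow> prob_space.indep_vars M (\<lambda>_. borel)
              (\<lambda>j \<omega>. case j of None \<Rightarrow> real (N \<omega>) | Some i \<Rightarrow> X i \<omega>) UNIV
        \<longrightarrow> (\<exists>g. distributed M lborel (\<lambda>\<omega>. \<Sum>i<N \<omega>. X i \<omega>) (\<lambda>x. ennreal (g x))
                  \<and> (\<forall>x. 0 \<le> g x \<and> g x \<le> C)))"
proof -
  interpret prob_space M by fact
  have Xm[measurable]: "\<And>i. random_variable borel (X i)"
    using distributed_measurable[OF dens] by simp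
  show ?thesis
  proof (intro exI[of _ C\<^sub>0] conjI allI impI)
    show "C\<^sub>0 > 0" by fact
  next
    fix n :: nat assume "n \<ge> 1"
    then obtain m where n: "n = Suc m" by (cases n) auto
    have ind: "indep_var borel (X m) borel (\<lambda>\<omega>. \<Sum>i<m. X i \<omega>)"
      by (rule indep_vars_sum) (auto intro: indep_vars_subset[OF indep])
    obtain g where "distributed M lborel (\<lambda>\<omega>. X m \<omega> + (\<Sum>i<m. X i \<omega>)) (\<lambda>x. ennreal (g x))"
      "\<forall>x. 0 \<le> g x \<and> g x \<le> C\<^sub>0"
      using distributed_add_bounded[OF ind dens[of m] _ bound nonneg] by auto
    then show "\<exists>g. distributed M lborel (\<lambda>\<omega>. \<Sum>i<n. X i \<omega>) (\<lambda>x. ennreal (g x)) \<and> (\<forall>x. 0 \<le> g x \<and> g x \<le> C\<^sub>0)"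
      unfolding n by (auto simp: add.commute)
  next
    fix N :: "'a \<Rightarrow> nat"
    assume Nm: "N \<in> measurable M (count_space UNIV)" and N1: "\<forall>\<omega>\<in>space M. N \<omega> \<ge> 1"
      and indN: "indep_vars (\<lambda>_. borel) (\<lambda>j \<omega>. case j of None \<Rightarrow> real (N \<omega>) | Some i \<Rightarrow> X i \<omega>) UNIV"
    define Z where "Z = (\<lambda>j \<omega>. case j of None \<Rightarrow> real (N \<omega>) | Some i \<Rightarrow> X i \<omega>)"
    define A :: "nat option set" where "A = {Some 0}"
    define B :: "nat option set" where "B = UNIV - {Some 0}"
    define F where "F = (\<lambda>x::nat option \<Rightarrow> real. \<Sum>i<nat \<lfloor>x None\<rfloor> - 1. x (Some (Suc i)))"
    have Fm: "F \<in> borel_measurable (PiM B (\<lambda>_. borel))"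
    proof -
      have "(\<lambda>x. (\<lambda>k. \<Sum>i<k - 1. x (Some (Suc i)) :: real) (nat \<lfloor>x None\<rfloor>)) \<in> borel_measurable (PiM B (\<lambda>_. borel))"
      proof (rule measurable_compose_countable[where f="\<lambda>k x. \<Sum>i<k - 1. x (Some (Suc i))"])
        fix k :: nat
        show "(\<lambda>x. \<Sum>i<k - 1. x (Some (Suc i)) :: real) \<in> borel_measurable (PiM B (\<lambda>_. borel))"
          by (intro borel_measurable_sum measurable_component_singleton) (auto simp: B_def)
      next
        show "(\<lambda>x. nat \<lfloor>x None\<rfloor>) \<in> measurable (PiM B (\<lambda>_. borel :: real measure)) (count_space UNIV)"
          by (rule measurable_compose[OF _ nat_floor_measurable])
             (auto simp: B_def intro!: measurable_component_singleton)
      qed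
      then show ?thesis unfolding F_def by simp
    qed
    have "indep_var (PiM A (\<lambda>_. borel)) (\<lambda>\<omega>. restrict (\<lambda>i. Z i \<omega>) A)
                    (PiM B (\<lambda>_. borel)) (\<lambda>\<omega>. restrict (\<lambda>i. Z i \<omega>) B)"
      by (rule indep_var_restrict) (use indN in \<open>auto simp: Z_def A_def B_def\<close>)
    then have "indep_var borel ((\<lambda>x. x (Some 0)) \<circ> (\<lambda>\<omega>. restrict (\<lambda>i. Z i \<omega>) A))
                    borel (F \<circ> (\<lambda>\<omega>. restrict (\<lambda>i. Z i \<omega>) B))"
      by (rule indep_var_compose) (auto simp: A_def intro!: Fm measurable_component_singleton)
    also have "((\<lambda>x. x (Some 0)) \<circ> (\<lambda>\<omega>. restrict (\<lambda>i. Z i \<omega>) A)) = X 0"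
      by (auto simp: A_def Z_def)
    also have "(F \<circ> (\<lambda>\<omega>. restrict (\<lambda>i. Z i \<omega>) B)) = (\<lambda>\<omega>. \<Sum>i<N \<omega> - 1. X (Suc i) \<omega>)"
      by (auto simp: B_def Z_def F_def fun_eq_iff)
    finally have ind: "indep_var borel (X 0) borel (\<lambda>\<omega>. \<Sum>i<N \<omega> - 1. X (Suc i) \<omega>)" .
    have Tm: "random_variable borel (\<lambda>\<omega>. \<Sum>i<N \<omega> - 1. X (Suc i) \<omega>)"
      using ind unfolding indep_var_def indep_vars_def
      apply (elim conjE) apply (drule bspec[of _ _ False]) by simp_all
    obtain g where g: "distributed M lborel (\<lambda>\<omega>. X 0 \<omega> + (\<Sum>i<N \<omega> - 1. X (Suc i) \<omega>)) (\<lambda>x. ennreal (g x))"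
      "\<forall>x. 0 \<le> g x \<and> g x \<le> C\<^sub>0"
      using distributed_add_bounded[OF ind dens[of 0] Tm bound nonneg] by auto
    have "distributed M lborel (\<lambda>\<omega>. \<Sum>i<N \<omega>. X i \<omega>) (\<lambda>x. ennreal (g x))"
    proof (rule distributed_cong_rv[OF _ g(1)])
      fix \<omega> assume "\<omega> \<in> space M"
      with N1 obtain k where "N \<omega> = Suc k" by (cases "N \<omega>") auto
      then show "X 0 \<omega> + (\<Sum>i<N \<omega> - 1. X (Suc i) \<omega>) = (\<Sum>i<N \<omega>. X i \<omega>)"
        by (simp only: sum.lessThan_Suc_shift diff_Suc_1)
    qed
    with g(2) show "\<exists>g. distributed M lborel (\<lambda>\<omega>. \<Sum>i<N \<omega>. X i \<omega>) (\<lambda>x. ennreal (g x)) \<and> (\<forall>x. 0 \<le> g x \<and> g x \<le> C\<^sub>0)"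
      by blast
  qed
qed

end
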